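(* Let $\tau:\mathbb{F}_p((t))^d\to\mathbb{F}_p((t))^d$, $(f_1,\dots,f_d)\mapsto(tf_1,\dots,tf_d)$, and let $\phi:\mathbb{F}_p((t))\to\mathrm{Aut}(\mathbb{F}_p((t))^d)$ be a continuous homomorphism satisfying $\phi(tf)=\tau\circ\phi(f)\circ\tau^{-1}$ for all $f\in\mathbb{F}_p((t))$. Then there is a compact open subgroup $V\le\mathbb{F}_p((t))^d$ such that $\phi(f)(V)=V$ for every $f\in\mathbb{F}_p[[t]]$ and $\tau(V)$ is a proper subgroup of $V$.
   Context: $\mathbb{F}_p((t))$ is the additive group of formal Laurent series over $\mathbb{F}_p$ with its usual locally compact topology, $\mathbb{F}_p[[t]]$ the compact open subgroup of power series. $\mathrm{Aut}(\mathbb{F}_p((t))^d)$ is the group of automorphisms of the topological group $(\mathbb{F}_p((t))^d,+)$ with the Braconnier topology: the group topology with basis of identity neighbourhoods $\{\alpha:\alpha(x)-x\in U,\ \alpha^{-1}(x)-x\in U\ \forall x\in K\}$, $K$ compact, $U$ an identity neighbourhood. *)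

theory Defs
  imports "HOL-Analysis.Analysis" "HOL-Computational_Algebra.Formal_Laurent_Series"
    "HOL-Library.Function_Algebras"
begin

text \<open>The field 'k is a finite field of prime order (i.e. F_p); 'k fls carries the
 library's t-adic metric topology; the vector space 'k fls ^ d is represented as
 functions 'd \<Rightarrow> 'k fls on a finite nonempty index type 'd, with the product topology
 (library instance from Function_Topology).\<close>

definition lf_aut :: "(('d::finite \<Rightarrow> 'k::field fls) \<Rightarrow> ('d \<Rightarrow> 'k fls)) set" where
  "lf_aut = {\<alpha>. bij \<alpha> \<and> (\<forall>x y. \<alpha> (x + y) = \<alpha> x + \<alpha> y)
               \<and> continuous_on UNIV \<alpha> \<and> continuous_on UNIV (inv \<alpha>)}"

definition brac_nbhd ::
  "('d::finite \<Rightarrow> 'k::field fls) set \<Rightarrow> ('d \<Rightarrow> 'k fls) set \<Rightarrow> (('d \<Rightarrow> 'k fls) \<Rightarrow> ('d \<Rightarrow> 'k fls)) set" where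
  "brac_nbhd K U = {\<gamma> \<in> lf_aut. \<forall>x\<in>K. \<gamma> x - x \<in> U \<and> inv \<gamma> x - x \<in> U}"

text \<open>The group topology on Aut whose neighbourhoods of \<alpha> are the translates N \<circ> \<alpha>
 of the basic identity neighbourhoods N.\<close>
definition brac_open :: "(('d::finite \<Rightarrow> 'k::field fls) \<Rightarrow> ('d \<Rightarrow> 'k fls)) set \<Rightarrow> bool" where
  "brac_open S \<longleftrightarrow> S \<subseteq> lf_aut \<and>
     (\<forall>\<alpha>\<in>S. \<exists>K U. compact K \<and> open U \<and> 0 \<in> U \<and>
        {\<beta> \<in> lf_aut. \<beta> \<circ> inv \<alpha> \<in> brac_nbhd K U} \<subseteq> S)"

lemma istopology_brac_open: "istopology brac_open"
  unfolding istopology_def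
proof (intro conjI allI impI)
  fix S T :: "(('d::finite \<Rightarrow> 'k::field fls) \<Rightarrow> ('d \<Rightarrow> 'k fls)) set"
  assume S: "brac_open S" and T: "brac_open T"
  show "brac_open (S \<inter> T)"
    unfolding brac_open_def
  proof (intro conjI ballI)
    show "S \<inter> T \<subseteq> lf_aut" using S unfolding brac_open_def by blast
  next
    fix \<alpha> assume a: "\<alpha> \<in> S \<inter> T"
    obtain K1 U1 where 1: "compact K1" "open U1" "0 \<in> U1"
      "{\<beta> \<in> lf_aut. \<beta> \<circ> inv \<alpha> \<in> brac_nbhd K1 U1} \<subseteq> S"
      using S a unfolding brac_open_def by blast
    obtain K2 U2 where 2: "compact K2" "open U2" "0 \<in> U2"
      "{\<beta> \<in> lf_aut. \<beta> \<circ> inv \<alpha> \<in> brac_nbhd K2 U2} \<subseteq> T"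
      using T a unfolding brac_open_def by blast
    have sub: "brac_nbhd (K1 \<union> K2) (U1 \<inter> U2) \<subseteq> brac_nbhd K1 U1 \<inter> brac_nbhd K2 U2"
      unfolding brac_nbhd_def by blast
    have "{\<beta> \<in> lf_aut. \<beta> \<circ> inv \<alpha> \<in> brac_nbhd (K1 \<union> K2) (U1 \<inter> U2)} \<subseteq> S \<inter> T"
      using sub 1(4) 2(4) by blast
    moreover have "compact (K1 \<union> K2)" using 1(1) 2(1) by (rule compact_Un)
    moreover have "open (U1 \<inter> U2)" using 1(2) 2(2) by (rule open_Int)
    moreover have "0 \<in> U1 \<inter> U2" using 1(3) 2(3) by blast
    ultimately show "\<exists>K U. compact K \<and> open U \<and> 0 \<in> U \<and>
        {\<beta> \<in> lf_aut. \<beta> \<circ> inv \<alpha> \<in> brac_nbhd K U} \<subseteq> S \<inter> T"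
      by (intro exI conjI)
  qed
next
  fix KK :: "(('d::finite \<Rightarrow> 'k::field fls) \<Rightarrow> ('d \<Rightarrow> 'k fls)) set set"
  assume "\<forall>S\<in>KK. brac_open S"
  then have h: "\<And>S. S \<in> KK \<Longrightarrow> brac_open S" by blast
  show "brac_open (\<Union>KK)"
    unfolding brac_open_def
  proof (intro conjI ballI)
    show "\<Union>KK \<subseteq> lf_aut" using h unfolding brac_open_def by blast
  next
    fix \<alpha> assume "\<alpha> \<in> \<Union>KK"
    then obtain S where S: "S \<in> KK" "\<alpha> \<in> S" by blast
    then obtain K0 U0 where 1: "compact K0" "open U0" "0 \<in> U0"
      "{\<beta> \<in> lf_aut. \<beta> \<circ> inv \<alpha> \<in> brac_nbhd K0 U0} \<subseteq> S"
      using h[OF S(1)] unfolding brac_open_def by blast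
    have "{\<beta> \<in> lf_aut. \<beta> \<circ> inv \<alpha> \<in> brac_nbhd K0 U0} \<subseteq> \<Union>KK"
      using 1(4) S(1) by blast
    then show "\<exists>K U. compact K \<and> open U \<and> 0 \<in> U \<and>
        {\<beta> \<in> lf_aut. \<beta> \<circ> inv \<alpha> \<in> brac_nbhd K U} \<subseteq> \<Union>KK"
      using 1(1-3) by (intro exI conjI)
  qed
qed

definition brac_topology :: "(('d::finite \<Rightarrow> 'k::field fls) \<Rightarrow> ('d \<Rightarrow> 'k fls)) topology" where
  "brac_topology = topology brac_open"

lemma openin_brac_topology: "openin brac_topology = brac_open"
  unfolding brac_topology_def by (rule topology_inverse'[OF istopology_brac_open])

definition add_subgroup :: "'a::ab_group_add set \<Rightarrow> bool" where
  "add_subgroup V \<longleftrightarrow> 0 \<in> V \<and> (\<forall>x\<in>V. \<forall>y\<in>V. x + y \<in> V \<and> - x \<in> V)"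

end

theory Submission imports Defs begin
unbundle fps_syntax

definition wt :: "int \<Rightarrow> real" where "wt m = 2 powr (- real_of_int m)"

lemma wt_pos: "wt m > 0" by (simp add: wt_def)

lemma dist_fls_eq:
  fixes a b :: "'a::group_add fls"
  assumes "a \<noteq> b"
  shows "dist a b = wt (fls_subdegree (a - b))"
proof (cases "fls_subdegree (a-b) \<ge> 0")
  case True
  then show ?thesis using assms
    by (simp add: dist_fls_def wt_def powr_minus powr_realpow[symmetric])
next
  case False
  then have "real (nat (- fls_subdegree (a - b))) = - real_of_int (fls_subdegree (a - b))" by simp
  then show ?thesis using assms False
    by (simp add: dist_fls_def wt_def powr_realpow[symmetric])
qed

lemma dist_fls_le:
  fixes a b :: "'a::group_add fls"
  assumes "\<And>i. i < m \<Longrightarrow> a $$ i = b $$ i"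
  shows "dist a b \<le> wt m"
proof (cases "a = b")
  case True then show ?thesis using wt_pos[of m] by simp
next
  case False
  have "m \<le> fls_subdegree (a - b)"
    using False assms by (intro fls_subdegree_geI) auto
  then show ?thesis using False by (simp add: dist_fls_eq wt_def)
qed

lemma dist_fls_lt:
  fixes a b :: "'a::group_add fls"
  assumes "dist a b < wt m" "i \<le> m"
  shows "a $$ i = b $$ i"
proof (cases "a = b")
  case True then show ?thesis by simp
next
  case False
  then have "wt (fls_subdegree (a - b)) < wt m" using assms dist_fls_eq by metis
  then have "m < fls_subdegree (a - b)" by (simp add: wt_def)
  then have "i < fls_subdegree (a - b)" using assms(2) by simp
  then have "(a - b) $$ i = 0" by (rule fls_eq0_below_subdegree)
  then show ?thesis by (metis fls_minus_nth eq_iff_diff_eq_0)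
qed

lemma wt_small: "e > 0 \<Longrightarrow> \<exists>m::nat. wt (int m) < e"
proof -
  assume "e > 0"
  then obtain n where "(inverse 2::real)^n < e" using real_arch_pow_inv[of e "inverse 2"] by auto
  moreover have "wt (int n) = inverse (2^n)"
    by (simp add: wt_def powr_minus powr_realpow)
  ultimately have "wt (int n) < e" by (simp add: power_one_over inverse_eq_divide)
  then show ?thesis by blast
qed

definition Bk :: "int \<Rightarrow> 'a::group_add fls set" where
  "Bk n = {f. \<forall>i<n. f $$ i = 0}"

lemma Bk_tb:
  fixes n :: int
  assumes "e > 0"
  shows "\<exists>k. finite k \<and> (Bk n :: 'a::{group_add,finite} fls set) \<subseteq> (\<Union>x\<in>k. ball x e)"
proof -
  obtain m :: nat where m: "wt (int m) < e" using wt_small assms by blast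
  define k :: "'a fls set" where "k = {f. \<forall>i. (i < n \<or> i \<ge> int m) \<longrightarrow> f $$ i = 0}"
  have "finite k"
  proof (rule inj_on_finite)
    show "inj_on (\<lambda>f. restrict (fls_nth f) {n..<int m}) k"
    proof (rule inj_onI)
      fix f g assume f: "f \<in> k" and g: "g \<in> k"
        and eq: "restrict (fls_nth f) {n..<int m} = restrict (fls_nth g) {n..<int m}"
      show "f = g"
      proof (rule fls_eqI)
        fix i
        show "f $$ i = g $$ i"
        proof (cases "i \<in> {n..<int m}")
          case True then show ?thesis using fun_cong[OF eq, of i] by simp
        next
          case False then show ?thesis using f g unfolding k_def by auto
        qed
      qed
    qed
    show "(\<lambda>f. restrict (fls_nth f) {n..<int m}) ` k \<subseteq> PiE {n..<int m} (\<lambda>_. UNIV)"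
      by auto
    show "finite (PiE {n..<int m} (\<lambda>_. UNIV :: 'a set))"
      by (rule finite_PiE) auto
  qed
  moreover have "Bk n \<subseteq> (\<Union>x\<in>k. ball x e)"
  proof
    fix x :: "'a fls" assume x: "x \<in> Bk n"
    define t where "t = Abs_fls (\<lambda>i. if i < int m then x $$ i else 0)"
    have tn: "t $$ i = (if i < int m then x $$ i else 0)" for i
      unfolding t_def
      by (rule nth_Abs_fls_lower_bound[of n]) (use x in \<open>auto simp: Bk_def\<close>)
    have "t \<in> k" using x by (auto simp: k_def tn Bk_def)
    moreover have "dist t x \<le> wt (int m)"
      by (rule dist_fls_le) (simp add: tn)
    ultimately have "\<exists>y\<in>k. dist y x < e" using m by (meson le_less_trans)
    then show "x \<in> (\<Union>x\<in>k. ball x e)" by (auto simp: dist_commute)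
  qed
  ultimately show ?thesis by blast
qed

lemma Bk_complete:
  "complete (Bk n :: 'a::group_add fls set)"
  unfolding complete_def
proof (intro allI impI, elim conjE)
  fix x :: "nat \<Rightarrow> 'a fls"
  assume xin: "\<forall>p. x p \<in> Bk n" and C: "Cauchy x"
  have "\<forall>j. \<exists>M. \<forall>p\<ge>M. \<forall>q\<ge>M. dist (x p) (x q) < wt j"
    using C wt_pos unfolding Cauchy_def by blast
  then obtain M where M: "\<And>j p q. p \<ge> M j \<Longrightarrow> q \<ge> M j \<Longrightarrow> dist (x p) (x q) < wt j"
    by metis
  have agree: "x p $$ i = x q $$ i" if "p \<ge> M j" "q \<ge> M j" "i \<le> j" for p q i j
    using dist_fls_lt[OF M[OF that(1,2)] that(3)] .
  define L where "L = Abs_fls (\<lambda>i. x (M i) $$ i)"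
  have Ln: "L $$ i = x (M i) $$ i" for i
    unfolding L_def
    by (rule nth_Abs_fls_lower_bound[of n]) (use xin in \<open>auto simp: Bk_def\<close>)
  have LB: "L \<in> Bk n" using xin by (auto simp: Bk_def Ln)
  have key: "x p $$ i = L $$ i" if "p \<ge> M j" "i \<le> j" for p i j
  proof -
    define q where "q = max p (M i)"
    have "x p $$ i = x q $$ i" using agree[of j p q i] that by (simp add: q_def)
    also have "\<dots> = x (M i) $$ i" using agree[of i q "M i" i] by (simp add: q_def)
    finally show ?thesis by (simp add: Ln)
  qed
  have "x \<longlonglongrightarrow> L"
  proof (rule metric_LIMSEQ_I)
    fix r :: real assume "r > 0"
    then obtain m :: nat where m: "wt (int m) < r" using wt_small by blast
    have "dist (x p) L < r" if "p \<ge> M (int m)" for p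
    proof -
      have "dist (x p) L \<le> wt (int m)"
        by (rule dist_fls_le) (use key[OF that] in auto)
      with m show ?thesis by linarith
    qed
    then show "\<exists>no. \<forall>p\<ge>no. dist (x p) L < r" by blast
  qed
  with LB show "\<exists>l\<in>Bk n. x \<longlonglongrightarrow> l" by blast
qed

lemma Bk_compact: "compact (Bk n :: 'a::{group_add,finite} fls set)"
  unfolding compact_eq_totally_bounded using Bk_complete Bk_tb by blast

lemma Bk_open: "open (Bk n :: 'a::group_add fls set)"
  unfolding open_dist
proof (intro ballI exI conjI allI impI)
  fix f :: "'a fls" and y assume f: "f \<in> Bk n" and d: "dist y f < wt n"
  show "y \<in> Bk n" unfolding Bk_def
  proof (intro CollectI allI impI)
    fix i assume "i < n"
    then have "y $$ i = f $$ i" using dist_fls_lt[OF d, of i] by simp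
    then show "y $$ i = 0" using f \<open>i < n\<close> by (simp add: Bk_def)
  qed
qed (rule wt_pos)

definition Vk :: "int \<Rightarrow> ('d::finite \<Rightarrow> 'a::group_add fls) set" where
  "Vk n = {x. \<forall>j. x j \<in> Bk n}"

lemma Vk_PiE: "Vk n = PiE UNIV (\<lambda>_. Bk n)"
  by (auto simp: Vk_def PiE_UNIV_domain)

lemma Vk_compact: "compact (Vk n :: ('d::finite \<Rightarrow> 'a::{group_add,finite} fls) set)"
proof -
  have "compactin (product_topology (\<lambda>_. euclidean) UNIV) (PiE UNIV (\<lambda>_::'d. Bk n :: 'a fls set))"
    unfolding compactin_PiE compactin_euclidean_iff by (intro disjI2 ballI Bk_compact)
  then show ?thesis unfolding Vk_PiE euclidean_product_topology by simp
qed

lemma Vk_open: "open (Vk n :: ('d::finite \<Rightarrow> 'a::group_add fls) set)"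
  unfolding Vk_PiE by (rule open_PiE) (auto simp: Bk_open)

lemma Vk_add: "x \<in> Vk n \<Longrightarrow> y \<in> Vk n \<Longrightarrow> x + y \<in> Vk n"
  by (auto simp: Vk_def Bk_def)
lemma Vk_diff: "x \<in> Vk n \<Longrightarrow> y \<in> Vk n \<Longrightarrow> x - y \<in> Vk n"
  by (auto simp: Vk_def Bk_def)
lemma Vk_uminus: "x \<in> Vk n \<Longrightarrow> - x \<in> Vk n"
  by (auto simp: Vk_def Bk_def)
lemma Vk_zero: "0 \<in> Vk n"
  by (auto simp: Vk_def Bk_def)
lemma Vk_diffD: "x - y \<in> Vk n \<Longrightarrow> y \<in> Vk n \<Longrightarrow> x \<in> Vk n"
  using Vk_add[of "x - y" n y] by simp

lemma brac_nbhd_open: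
  "brac_open (brac_nbhd (Vk 0) (Vk 0) :: (('d::finite \<Rightarrow> 'k::{field,finite} fls) \<Rightarrow> _) set)"
  unfolding brac_open_def
proof (intro conjI ballI)
  show "brac_nbhd (Vk 0) (Vk 0) \<subseteq> lf_aut" by (auto simp: brac_nbhd_def)
next
  fix \<alpha> :: "('d \<Rightarrow> 'k fls) \<Rightarrow> _" assume a: "\<alpha> \<in> brac_nbhd (Vk 0) (Vk 0)"
  have ab: "bij \<alpha>" and a1: "\<And>x. x \<in> Vk 0 \<Longrightarrow> \<alpha> x - x \<in> Vk 0"
    and a2: "\<And>x. x \<in> Vk 0 \<Longrightarrow> inv \<alpha> x - x \<in> Vk 0"
    using a by (auto simp: brac_nbhd_def lf_aut_def)
  have "{\<beta> \<in> lf_aut. \<beta> \<circ> inv \<alpha> \<in> brac_nbhd (Vk 0) (Vk 0)} \<subseteq> brac_nbhd (Vk 0) (Vk 0)"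
  proof safe
    fix \<beta> assume b: "\<beta> \<in> lf_aut" and g: "\<beta> \<circ> inv \<alpha> \<in> brac_nbhd (Vk 0) (Vk 0)"
    define \<gamma> where "\<gamma> = \<beta> \<circ> inv \<alpha>"
    have gb: "bij \<gamma>" and g1: "\<And>x. x \<in> Vk 0 \<Longrightarrow> \<gamma> x - x \<in> Vk 0"
      and g2: "\<And>x. x \<in> Vk 0 \<Longrightarrow> inv \<gamma> x - x \<in> Vk 0"
      using g by (auto simp: brac_nbhd_def lf_aut_def \<gamma>_def)
    have bg: "\<beta> = \<gamma> \<circ> \<alpha>"
      using ab by (auto simp: \<gamma>_def fun_eq_iff bij_is_inj inv_f_f)
    have ib: "inv \<beta> = inv \<alpha> \<circ> inv \<gamma>" using bg ab gb by (simp add: o_inv_distrib)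
    show "\<beta> \<in> brac_nbhd (Vk 0) (Vk 0)"
      unfolding brac_nbhd_def
    proof (intro CollectI conjI ballI b)
      fix x :: "'d \<Rightarrow> 'k fls" assume x: "x \<in> Vk 0"
      have ax: "\<alpha> x \<in> Vk 0" using a1[OF x] x by (rule Vk_diffD)
      have "\<beta> x - x = (\<gamma> (\<alpha> x) - \<alpha> x) + (\<alpha> x - x)" by (simp add: bg)
      then show "\<beta> x - x \<in> Vk 0" using g1[OF ax] a1[OF x] Vk_add by metis
      have gx: "inv \<gamma> x \<in> Vk 0" using g2[OF x] x by (rule Vk_diffD)
      have "inv \<beta> x - x = (inv \<alpha> (inv \<gamma> x) - inv \<gamma> x) + (inv \<gamma> x - x)" by (simp add: ib)
      then show "inv \<beta> x - x \<in> Vk 0" using a2[OF gx] g2[OF x] Vk_add by metis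
    qed
  qed
  then show "\<exists>K U. compact K \<and> open U \<and> 0 \<in> U \<and>
        {\<beta> \<in> lf_aut. \<beta> \<circ> inv \<alpha> \<in> brac_nbhd K U} \<subseteq> brac_nbhd (Vk 0) (Vk 0)"
    using Vk_compact Vk_open Vk_zero by blast
qed

lemma nbhd_image:
  assumes "\<gamma> \<in> brac_nbhd (Vk 0) (Vk 0)"
  shows "\<gamma> ` Vk 0 = (Vk 0 :: ('d::finite \<Rightarrow> 'k::field fls) set)"
proof -
  have gb: "bij \<gamma>" and g1: "\<And>x. x \<in> Vk 0 \<Longrightarrow> \<gamma> x - x \<in> Vk 0"
    and g2: "\<And>x. x \<in> Vk 0 \<Longrightarrow> inv \<gamma> x - x \<in> Vk 0"
    using assms by (auto simp: brac_nbhd_def lf_aut_def)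
  show ?thesis
  proof
    show "\<gamma> ` Vk 0 \<subseteq> Vk 0" using g1 Vk_diffD by blast
    show "Vk 0 \<subseteq> \<gamma> ` Vk 0"
    proof
      fix x :: "'d \<Rightarrow> 'k fls" assume x: "x \<in> Vk 0"
      have "inv \<gamma> x \<in> Vk 0" using g2[OF x] x by (rule Vk_diffD)
      moreover have "x = \<gamma> (inv \<gamma> x)" using gb by (simp add: bij_is_surj surj_f_inv_f)
      ultimately show "x \<in> \<gamma> ` Vk 0" by blast
    qed
  qed
qed

theorem mainTheorem11:
  fixes \<phi> :: "'k::{field,finite} fls \<Rightarrow> (('d::finite \<Rightarrow> 'k fls) \<Rightarrow> ('d \<Rightarrow> 'k fls))"
    and \<tau> :: "('d \<Rightarrow> 'k fls) \<Rightarrow> ('d \<Rightarrow> 'k fls)"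
  assumes p: "prime CARD('k)"
    and tau: "\<tau> = (\<lambda>x j. fls_X * x j)"
    and into: "\<And>f. \<phi> f \<in> lf_aut"
    and hom: "\<And>f g. \<phi> (f + g) = \<phi> f \<circ> \<phi> g"
    and cont: "continuous_map euclidean brac_topology \<phi>"
    and equiv: "\<And>f. \<phi> (fls_X * f) = \<tau> \<circ> \<phi> f \<circ> inv \<tau>"
  shows "\<exists>V :: ('d \<Rightarrow> 'k fls) set. add_subgroup V \<and> compact V \<and> open V
           \<and> (\<forall>f \<in> range fps_to_fls. \<phi> f ` V = V)
           \<and> \<tau> ` V \<subset> V"
proof -
  define S :: "(('d \<Rightarrow> 'k fls) \<Rightarrow> _) set" where "S = brac_nbhd (Vk 0) (Vk 0)"
  have bij_phi: "bij (\<phi> f)" for f using into[of f] by (simp add: lf_aut_def)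
  have phi0: "\<phi> 0 = id"
  proof
    fix x
    have "\<phi> 0 (\<phi> 0 x) = \<phi> 0 x" using hom[of 0 0] by (metis add_0 comp_apply)
    then show "\<phi> 0 x = id x" using bij_is_inj[OF bij_phi[of 0]] by (simp add: inj_eq)
  qed
  have "openin euclidean {x \<in> topspace euclidean. \<phi> x \<in> S}"
    by (rule openin_continuous_map_preimage[OF cont])
       (simp add: openin_brac_topology S_def brac_nbhd_open)
  then have opP: "open {x. \<phi> x \<in> S}" by simp
  have "\<phi> 0 \<in> S" using into[of 0] by (simp add: S_def brac_nbhd_def phi0 Vk_zero)
  then obtain e where e: "e > 0" "\<And>y. dist y 0 < e \<Longrightarrow> \<phi> y \<in> S"
    using opP unfolding open_dist by blast
  obtain m :: nat where m: "wt (int m) < e" using wt_small e(1) by blast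
  have small: "\<phi> g ` Vk 0 = Vk 0" if "g \<in> Bk (int m)" for g
  proof -
    have "dist g 0 \<le> wt (int m)" by (rule dist_fls_le) (use that in \<open>auto simp: Bk_def\<close>)
    then have "\<phi> g \<in> S" using e(2) m by simp
    then show ?thesis unfolding S_def by (rule nbhd_image)
  qed
  define T :: "nat \<Rightarrow> ('d \<Rightarrow> 'k fls) \<Rightarrow> ('d \<Rightarrow> 'k fls)" where
    "T n x = (\<lambda>j. fls_shift (- int n) (x j))" for n x
  have tau': "\<tau> = T 1" using tau by (simp add: T_def fls_X_times_conv_shift fun_eq_iff)
  have Tinj: "inj (T n)" for n
    by (rule injI) (auto simp: T_def fun_eq_iff fls_shift_eq_iff)
  have TSuc: "T (Suc n) = \<tau> \<circ> T n" for n
    by (simp add: tau' T_def fun_eq_iff add.commute)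
  have eq1: "\<phi> (fls_shift (-1) g) \<circ> \<tau> = \<tau> \<circ> \<phi> g" for g
  proof -
    have "\<phi> (fls_shift (-1) g) \<circ> \<tau> = \<tau> \<circ> \<phi> g \<circ> (inv \<tau> \<circ> \<tau>)"
      using equiv[of g] by (simp add: fls_X_times_conv_shift o_assoc)
    also have "inv \<tau> \<circ> \<tau> = id" using Tinj[of 1] tau' by (simp add: inv_o_cancel)
    finally show ?thesis by (simp add: comp_def)
  qed
  have iter: "\<phi> (fls_shift (- int n) g) \<circ> T n = T n \<circ> \<phi> g" for n g
  proof (induction n)
    case 0
    have "T 0 = id" by (simp add: T_def fun_eq_iff)
    then show ?case by simp
  next
    case (Suc n)
    have sh: "fls_shift (- int (Suc n)) g = fls_shift (-1) (fls_shift (- int n) g)" by (simp add: algebra_simps)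
    have "\<phi> (fls_shift (- int (Suc n)) g) \<circ> T (Suc n)
        = (\<phi> (fls_shift (-1) (fls_shift (- int n) g)) \<circ> \<tau>) \<circ> T n"
      by (simp only: sh TSuc o_assoc)
    also have "\<dots> = \<tau> \<circ> (\<phi> (fls_shift (- int n) g) \<circ> T n)" by (simp only: eq1 o_assoc)
    also have "\<dots> = T (Suc n) \<circ> \<phi> g" by (simp only: Suc TSuc o_assoc)
    finally show ?case .
  qed
  define V :: "('d \<Rightarrow> 'k fls) set" where "V = Vk (- int m)"
  have TV: "T m ` V = Vk 0"
  proof
    show "T m ` V \<subseteq> Vk 0" by (auto simp: T_def V_def Vk_def Bk_def)
    show "Vk 0 \<subseteq> T m ` V"
    proof
      fix w :: "'d \<Rightarrow> 'k fls" assume w: "w \<in> Vk 0"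
      define x where "x = (\<lambda>j. fls_shift (int m) (w j))"
      have "x \<in> V" using w by (auto simp: x_def V_def Vk_def Bk_def)
      moreover have "w = T m x" by (simp add: x_def T_def)
      ultimately show "w \<in> T m ` V" by blast
    qed
  qed
  have inv: "\<phi> f ` V = V" if "f \<in> range fps_to_fls" for f
  proof -
    define h where "h = fls_shift (- int m) f"
    have "h \<in> Bk (int m)" using that by (auto simp: h_def Bk_def)
    then have "\<phi> h ` Vk 0 = Vk 0" by (rule small)
    then have "T m ` (\<phi> f ` V) = T m ` V"
      using iter[of m f] TV by (metis h_def image_comp)
    then show ?thesis using Tinj[of m] by (simp add: inj_image_eq_iff)
  qed
  have sub: "\<tau> ` V \<subset> V"
  proof
    show "\<tau> ` V \<subseteq> V" by (auto simp: tau' T_def V_def Vk_def Bk_def)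
    define e0 :: "'d \<Rightarrow> 'k fls" where "e0 = (\<lambda>j. fls_shift (int m) 1)"
    have "e0 \<in> V" by (auto simp: e0_def V_def Vk_def Bk_def)
    moreover have "e0 \<notin> \<tau> ` V"
    proof
      assume "e0 \<in> \<tau> ` V"
      then obtain x where x: "x \<in> V" "e0 = \<tau> x" by blast
      have "e0 undefined $$ (- int m) = x undefined $$ (- int m - 1)"
        using x(2) by (simp add: tau' T_def)
      also have "\<dots> = 0" using x(1) by (simp add: V_def Vk_def Bk_def)
      finally show False by (simp add: e0_def)
    qed
    ultimately show "\<tau> ` V \<noteq> V" by blast
  qed
  have "add_subgroup V" unfolding add_subgroup_def V_def using Vk_zero Vk_add Vk_uminus by blast
  moreover have "compact V" unfolding V_def by (rule Vk_compact)
  moreover have "open V" unfolding V_def by (rule Vk_open)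
  ultimately show ?thesis using inv sub by blast
qed

end
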